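(* Let $n\geqslant 1$ and let $T$ be a basic tree with $2n$ vertices. Let $D$ be the directed graph obtained from $T$ by replacing every edge $ab$ of $T$ by the two directed edges $\overrightarrow{ab}$ and $\overrightarrow{ba}$. Then $\Delta(D)$ is homotopy equivalent to the sphere $\mathbb{S}^{n-1}$.
   Context: A basic tree is either a tree with exactly two vertices, or a tree with $2n$ vertices, $n$ of which are leaves and $n$ non-leaves, such that every non-leaf is adjacent to exactly one leaf. For a finite directed graph $D$, $\Delta(D)$ has the directed edges of $D$ as vertices and the edge sets of directed forests in $D$ (vertex-disjoint unions of rooted directed trees; equivalently, edge sets in which every vertex has in-degree at most $1$ and there is no directed cycle) as faces. *)

theory Defs
  imports "HOL-Analysis.Analysis"
begin

definition simple_graph :: "'a set \<Rightarrow> 'a set set \<Rightarrow> bool" where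
  "simple_graph V E \<longleftrightarrow> finite V \<and>
     (\<forall>e\<in>E. \<exists>a b. e = {a, b} \<and> a \<noteq> b \<and> a \<in> V \<and> b \<in> V)"

definition adj :: "'a set set \<Rightarrow> 'a \<Rightarrow> 'a \<Rightarrow> bool" where
  "adj E a b \<longleftrightarrow> {a, b} \<in> E \<and> a \<noteq> b"

definition graph_connected :: "'a set \<Rightarrow> 'a set set \<Rightarrow> bool" where
  "graph_connected V E \<longleftrightarrow>
     (\<forall>a\<in>V. \<forall>b\<in>V. (a, b) \<in> {(x, y). adj E x y}\<^sup>*)"

definition is_cycle :: "'a set \<Rightarrow> 'a set set \<Rightarrow> 'a list \<Rightarrow> bool" where
  "is_cycle V E cs \<longleftrightarrow> length cs \<ge> 3 \<and> distinct cs \<and> set cs \<subseteq> V \<and>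
     (\<forall>i. Suc i < length cs \<longrightarrow> adj E (cs ! i) (cs ! Suc i)) \<and>
     adj E (last cs) (hd cs)"

definition is_tree :: "'a set \<Rightarrow> 'a set set \<Rightarrow> bool" where
  "is_tree V E \<longleftrightarrow> simple_graph V E \<and> V \<noteq> {} \<and> graph_connected V E \<and>
     \<not> (\<exists>cs. is_cycle V E cs)"

definition degree :: "'a set set \<Rightarrow> 'a \<Rightarrow> nat" where
  "degree E v = card {e\<in>E. v \<in> e}"

definition is_leaf :: "'a set set \<Rightarrow> 'a \<Rightarrow> bool" where
  "is_leaf E v \<longleftrightarrow> degree E v = 1"

definition basic_tree :: "'a set \<Rightarrow> 'a set set \<Rightarrow> bool" where
  "basic_tree V E \<longleftrightarrow> is_tree V E \<and>
     (card V = 2 \<or>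
      (\<exists>n. card V = 2 * n \<and> card {v\<in>V. is_leaf E v} = n \<and>
           card {v\<in>V. \<not> is_leaf E v} = n \<and>
           (\<forall>v\<in>V. \<not> is_leaf E v \<longrightarrow> card {u\<in>V. is_leaf E u \<and> adj E v u} = 1)))"

definition doubled_arcs :: "'a set set \<Rightarrow> ('a \<times> 'a) set" where
  "doubled_arcs E = {(a, b). adj E a b}"

definition directed_forest :: "('a \<times> 'a) set \<Rightarrow> ('a \<times> 'a) set \<Rightarrow> bool" where
  "directed_forest A F \<longleftrightarrow> F \<subseteq> A \<and>
     (\<forall>v. card {u. (u, v) \<in> F} \<le> 1) \<and> acyclic F"

text \<open>Geometric realization of the simplicial complex Delta(D): vertices are arcs,
  faces are directed forests; realized as the standard subspace of the product
  space of real-valued functions on arcs.\<close>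
definition forest_complex_realization :: "('a \<times> 'a) set \<Rightarrow> (('a \<times> 'a) \<Rightarrow> real) topology" where
  "forest_complex_realization A =
     subtopology (powertop_real UNIV)
       {x. (\<forall>e. 0 \<le> x e) \<and> directed_forest A {e. x e \<noteq> 0} \<and> sum x A = 1}"

end

theory Submission
  imports Defs
begin


lemma fin_in:
  assumes "F \<subseteq> A" "finite A" shows "finite {u. (u,v)\<in>F}"
proof -
  have "{u. (u,v) \<in> F} \<subseteq> fst ` A"
  proof
    fix u assume "u \<in> {u. (u,v)\<in>F}"
    then have "(u,v)\<in>A" using assms(1) by auto
    then show "u \<in> fst ` A" by (rule rev_image_eqI) simp
  qed
  then show ?thesis using finite_subset finite_imageI[OF assms(2)] by blast
qed

lemma forest_intro:
  assumes "finite A" "F \<subseteq> A" "\<And>v a b. (a,v)\<in>F \<Longrightarrow> (b,v)\<in>F \<Longrightarrow> a=b" "acyclic F"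
  shows "directed_forest A F"
proof -
  have "card {u. (u,v)\<in>F} \<le> 1" for v
  proof -
    have fin: "finite {u. (u,v)\<in>F}" using fin_in[OF assms(2,1)] .
    have "card {u. (u,v)\<in>F} \<le> Suc 0"
      unfolding card_le_Suc0_iff_eq[OF fin] using assms(3) by blast
    then show ?thesis by simp
  qed
  then show ?thesis using assms(2,4) unfolding directed_forest_def by blast
qed

lemma forest_inj:
  assumes "directed_forest A F" "finite A" "(a,v)\<in>F" "(b,v)\<in>F"
  shows "a = b"
proof -
  have FA: "F \<subseteq> A" using assms(1) unfolding directed_forest_def by simp
  have fin: "finite {u. (u,v)\<in>F}" using fin_in[OF FA assms(2)] .
  have "card {u. (u,v)\<in>F} \<le> 1" using assms(1) unfolding directed_forest_def by simp
  then have "card {u. (u,v)\<in>F} \<le> Suc 0" by simp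
  then show ?thesis unfolding card_le_Suc0_iff_eq[OF fin] using assms(3,4) by blast
qed

lemma forest_mono:
  assumes "directed_forest A F" "G \<subseteq> F" "finite A"
  shows "directed_forest A G"
proof (rule forest_intro[OF assms(3)])
  have FA: "F \<subseteq> A" and acF: "acyclic F" using assms(1) unfolding directed_forest_def by simp_all
  show "G \<subseteq> A" using subset_trans[OF assms(2) FA] .
  show "acyclic G" using acyclic_subset[OF acF assms(2)] .
  fix v a b assume "(a,v)\<in>G" "(b,v)\<in>G"
  then have "(a,v)\<in>F" "(b,v)\<in>F" using assms(2) by auto
  then show "a=b" by (rule forest_inj[OF assms(1,3)])
qed

lemma acyclic_add_sinks:
  assumes "acyclic R" "\<And>a b c. (a,b)\<in>S \<Longrightarrow> (b,c) \<notin> R \<union> S"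
  shows "acyclic (R \<union> S)"
proof -
  have claim: "(x,y) \<in> R\<^sup>+ \<or> y \<in> Range S" if "(x,y) \<in> (R\<union>S)\<^sup>+" for x y
    using that
  proof (induction rule: trancl_induct)
    case (base y) then show ?case by auto
  next
    case (step y z)
    have "y \<notin> Range S"
    proof
      assume "y \<in> Range S"
      then obtain a where "(a,y) \<in> S" by auto
      then show False using assms(2) step.hyps(2) by metis
    qed
    then have "(x,y) \<in> R\<^sup>+" using step.IH by auto
    then show ?case using step.hyps(2) by auto
  qed
  show ?thesis unfolding acyclic_def
  proof
    fix v show "(v,v) \<notin> (R\<union>S)\<^sup>+"
    proof
      assume h: "(v,v) \<in> (R\<union>S)\<^sup>+"
      show False
      proof (cases "v \<in> Range S")
        case True
        from tranclD[OF h] obtain c where "(v,c) \<in> R \<union> S" by auto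
        moreover obtain a where "(a,v) \<in> S" using True by auto
        ultimately show False using assms(2) by metis
      next
        case False
        then have "(v,v) \<in> R\<^sup>+" using claim[OF h] by auto
        then show False using assms(1) unfolding acyclic_def by auto
      qed
    qed
  qed
qed

lemma acyclic_bip:
  assumes "R \<subseteq> X \<times> Y" "X \<inter> Y = {}"
  shows "acyclic R"
proof -
  have "(x,y) \<in> R" if "(x,y) \<in> R\<^sup>+" for x y
    using that
  proof (induction rule: trancl_induct)
    case (base y) then show ?case by auto
  next
    case (step y z)
    have "y \<in> Y" using step.IH assms(1) by auto
    moreover have "y \<in> X" using step.hyps(2) assms(1) by auto
    ultimately show ?case using assms(2) by auto
  qed
  moreover have "(v,v) \<notin> R" for v using assms by auto
  ultimately show ?thesis unfolding acyclic_def by auto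
qed




locale bt =
  fixes V :: "'a set" and E :: "'a set set" and W :: "'a set" and p :: "'a \<Rightarrow> 'a"
    and n :: nat and \<nu> :: "nat \<Rightarrow> 'a"
  assumes finV: "finite V"
  and sg: "simple_graph V E"
  and WV: "W \<subseteq> V"
  and n1: "n \<ge> 1"
  and bij: "bij_betw \<nu> {..<n} W"
  and p_in: "\<And>v. v\<in>V \<Longrightarrow> p v \<in> V"
  and p_inv: "\<And>v. v\<in>V \<Longrightarrow> p (p v) = v"
  and p_adj: "\<And>v. v\<in>V \<Longrightarrow> adj E v (p v)"
  and W_side: "\<And>v. v\<in>V \<Longrightarrow> v \<in> W \<longleftrightarrow> p v \<notin> W"
  and leafy: "\<And>u v. v\<in>V \<Longrightarrow> v \<notin> W \<Longrightarrow> adj E u v \<Longrightarrow> u = p v"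
begin

abbreviation "A \<equiv> doubled_arcs E"

lemma adjV: assumes "adj E u v" shows "u \<in> V" "v \<in> V"
proof -
  from assms have e: "{u,v} \<in> E" unfolding adj_def by simp
  have "\<forall>e\<in>E. \<exists>a b. e = {a, b} \<and> a \<noteq> b \<and> a \<in> V \<and> b \<in> V" using sg by (simp add: simple_graph_def)
  from bspec[OF this e] obtain a b where ab: "{u,v} = {a,b}" "a \<in> V" "b \<in> V" by blast
  have "u \<in> {a,b}" "v \<in> {a,b}" using ab(1) by (metis insertI1, metis insertI1 insert_commute)
  then show "u \<in> V" "v \<in> V" using ab(2,3) by auto
qed

lemma adj_sym: "adj E u v \<Longrightarrow> adj E v u"
  unfolding adj_def by (metis insert_commute)

lemma adj_ne: "adj E u v \<Longrightarrow> u \<noteq> v" unfolding adj_def by simp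

lemma A_iff: "(u,v) \<in> A \<longleftrightarrow> adj E u v" unfolding doubled_arcs_def by simp

lemma finA: "finite A"
proof -
  have "A \<subseteq> V \<times> V"
  proof
    fix e assume "e \<in> A"
    then obtain u v where "e = (u,v)" "adj E u v" by (cases e) (simp add: A_iff)
    then show "e \<in> V \<times> V" using adjV by simp
  qed
  then show ?thesis using finite_subset finite_cartesian_product[OF finV finV] by blast
qed

lemma p_ne: "v \<in> V \<Longrightarrow> p v \<noteq> v" using adj_ne[OF p_adj] by metis

lemma nu_W: "i < n \<Longrightarrow> \<nu> i \<in> W" using bij_betw_apply[OF bij] by simp
lemma nu_V: "i < n \<Longrightarrow> \<nu> i \<in> V" using nu_W WV by (simp add: subset_iff)
lemma nu_inj: "i < n \<Longrightarrow> j < n \<Longrightarrow> \<nu> i = \<nu> j \<Longrightarrow> i = j"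
  using inj_onD[OF bij_betw_imp_inj_on[OF bij]] by simp
lemma pW: assumes "w \<in> W" shows "p w \<notin> W"
proof -
  have "w \<in> V" using WV assms by blast
  then show ?thesis using W_side assms by simp
qed
lemma pnW: "v \<in> V \<Longrightarrow> v \<notin> W \<Longrightarrow> p v \<in> W" using W_side by simp

definition "R w = {u\<in>V. adj E u w \<and> u \<noteq> p w}"
lemma finR: "finite (R w)" using finV unfolding R_def by auto

definition Pp :: "('a\<times>'a \<Rightarrow> real) \<Rightarrow> nat \<Rightarrow> real" where "Pp x i = x (\<nu> i, p (\<nu> i)) + (\<Sum>u\<in>R (\<nu> i). x (u, \<nu> i))"
definition Nn :: "('a\<times>'a \<Rightarrow> real) \<Rightarrow> nat \<Rightarrow> real" where "Nn x i = x (p (\<nu> i), \<nu> i)"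
definition sv :: "('a\<times>'a \<Rightarrow> real) \<Rightarrow> nat \<Rightarrow> real" where "sv x i = Pp x i - Nn x i"
definition nrm :: "('a\<times>'a \<Rightarrow> real) \<Rightarrow> real" where "nrm x = sqrt (\<Sum>i<n. (sv x i)^2)"
definition Fm :: "('a\<times>'a \<Rightarrow> real) \<Rightarrow> nat \<Rightarrow> real" where "Fm x = (\<lambda>i. if i < n then sv x i / nrm x else 0)"
definition Ls :: "(nat \<Rightarrow> real) \<Rightarrow> real" where "Ls y = (\<Sum>i<n. \<bar>y i\<bar>)"
definition "ix a = inv_into {..<n} \<nu> a"
definition Gm :: "(nat \<Rightarrow> real) \<Rightarrow> 'a\<times>'a \<Rightarrow> real" where "Gm y = (\<lambda>(a,b). if a \<in> W \<and> b = p a then max (y (ix a)) 0 / Ls y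
    else if b \<in> W \<and> a = p b then max (- y (ix b)) 0 / Ls y else 0)"

definition "B w = insert (w, p w) (insert (p w, w) ((\<lambda>u. (u,w)) ` R w))"

lemma A_Union: "A = (\<Union>i\<in>{..<n}. B (\<nu> i))"
proof (intro equalityI subsetI)
  fix e assume "e \<in> A"
  then obtain u v where e: "e = (u,v)" "adj E u v" by (auto simp: doubled_arcs_def)
  have vV: "v \<in> V" "u \<in> V" using adjV e by auto
  show "e \<in> (\<Union>i\<in>{..<n}. B (\<nu> i))"
  proof (cases "v \<in> W")
    case True
    then obtain i where i: "i < n" "\<nu> i = v" using bij by (auto simp: bij_betw_def)
    then show ?thesis using e vV by (auto simp: B_def R_def)
  next
    case False
    then have "u = p v" using leafy vV e by auto
    then have "u \<in> W" "p u = v" using pnW vV False p_inv by auto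
    then obtain i where i: "i < n" "\<nu> i = u" using bij by (auto simp: bij_betw_def)
    then show ?thesis using e \<open>p u = v\<close> by (auto simp: B_def)
  qed
next
  fix e assume "e \<in> (\<Union>i\<in>{..<n}. B (\<nu> i))"
  then obtain i where i: "i < n" "e \<in> B (\<nu> i)" by auto
  have "adj E (\<nu> i) (p (\<nu> i))" using p_adj nu_V i by auto
  then show "e \<in> A" using i adj_sym by (auto simp: B_def R_def A_iff)
qed

lemma B_sum: "w \<in> W \<Longrightarrow> sum x (B w) = x (w, p w) + x (p w, w) + (\<Sum>u\<in>R w. x (u, w))"
proof -
  assume w: "w \<in> W"
  have wV: "w \<in> V" using w WV by auto
  have ne: "(w, p w) \<noteq> (p w, w)" using p_ne wV by auto
  have n1: "(w, p w) \<notin> (\<lambda>u. (u,w)) ` R w" using p_ne wV by auto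
  have n2: "(p w, w) \<notin> (\<lambda>u. (u,w)) ` R w" by (auto simp: R_def)
  have "sum x ((\<lambda>u. (u,w)) ` R w) = (\<Sum>u\<in>R w. x (u, w))"
    by (subst sum.reindex) (auto simp: inj_on_def)
  then show ?thesis unfolding B_def using ne n1 n2 finR by (simp add: sum.insert_if add_ac)
qed

lemma sum_A: "sum x A = (\<Sum>i<n. Pp x i + Nn x i)"
proof -
  have "sum x A = (\<Sum>i<n. sum x (B (\<nu> i)))"
    unfolding A_Union
  proof (rule sum.UNION_disjoint)
    show "\<forall>i\<in>{..<n}. finite (B (\<nu> i))" using finR by (auto simp: B_def)
    show "\<forall>i\<in>{..<n}. \<forall>j\<in>{..<n}. i \<noteq> j \<longrightarrow> B (\<nu> i) \<inter> B (\<nu> j) = {}"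
    proof (intro ballI impI)
      fix i j assume ij: "i \<in> {..<n}" "j \<in> {..<n}" "i \<noteq> j"
      then have d: "\<nu> i \<noteq> \<nu> j" using nu_inj by auto
      have W: "\<nu> i \<in> W" "\<nu> j \<in> W" using ij nu_W by auto
      have "p (\<nu> i) \<notin> W" "p (\<nu> j) \<notin> W" using W pW by auto
      then show "B (\<nu> i) \<inter> B (\<nu> j) = {}" using d W by (auto simp: B_def)
    qed
  qed simp
  also have "\<dots> = (\<Sum>i<n. Pp x i + Nn x i)"
    by (rule sum.cong) (auto simp: B_sum nu_W Pp_def Nn_def add_ac)
  finally show ?thesis .
qed


definition Dset :: "('a\<times>'a \<Rightarrow> real) set" where "Dset = {x. (\<forall>e. 0 \<le> x e) \<and> directed_forest A {e. x e \<noteq> 0} \<and> sum x A = 1}"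
abbreviation "Dt \<equiv> forest_complex_realization A"

lemma topD: "topspace Dt = Dset"
  by (simp add: forest_complex_realization_def Dset_def)

lemma D_nn: "x \<in> Dset \<Longrightarrow> 0 \<le> x e" by (cases e) (auto simp: Dset_def)
lemma D_out: "x \<in> Dset \<Longrightarrow> e \<notin> A \<Longrightarrow> x e = 0"
  by (auto simp: Dset_def directed_forest_def)
lemma D_forest: "x \<in> Dset \<Longrightarrow> directed_forest A {e. x e \<noteq> 0}" by (auto simp: Dset_def)
lemma D_sum: "x \<in> Dset \<Longrightarrow> sum x A = 1" by (auto simp: Dset_def)

lemma Pp_nn: assumes "x \<in> Dset" shows "0 \<le> Pp x i"
proof -
  have "0 \<le> (\<Sum>u\<in>R (\<nu> i). x (u, \<nu> i))" using D_nn[OF assms] by (simp add: sum_nonneg)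
  then show ?thesis using D_nn[OF assms] by (simp add: Pp_def)
qed
lemma Nn_nn: "x \<in> Dset \<Longrightarrow> 0 \<le> Nn x i"
  unfolding Nn_def using D_nn by auto

lemma D_excl:
  assumes x: "x \<in> Dset" and i: "i < n"
  shows "Pp x i = 0 \<or> Nn x i = 0"
proof (rule disjCI)
  assume nz: "Nn x i \<noteq> 0"
  define w where "w = \<nu> i"
  have wV: "w \<in> V" using nu_V i w_def by auto
  have F: "directed_forest A {e. x e \<noteq> 0}" using D_forest x .
  have in1: "(p w, w) \<in> {e. x e \<noteq> 0}" using nz by (simp add: Nn_def w_def)
  have "x (u, w) = 0" if "u \<in> R w" for u
  proof (rule ccontr)
    assume "x (u,w) \<noteq> 0"
    then have "u = p w" using forest_inj[OF F finA _ in1, of u] by auto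
    then show False using that by (auto simp: R_def)
  qed
  then have s0: "(\<Sum>u\<in>R w. x (u, w)) = 0" by simp
  have "x (w, p w) = 0"
  proof (rule ccontr)
    assume "x (w, p w) \<noteq> 0"
    then have "(w, w) \<in> {e. x e \<noteq> 0}\<^sup>+" using in1
      by (meson r_into_trancl' trancl_into_trancl mem_Collect_eq)
    then show False using F unfolding directed_forest_def acyclic_def by auto
  qed
  then show "Pp x i = 0" using s0 by (simp add: Pp_def w_def)
qed

lemma abs_sv: "x \<in> Dset \<Longrightarrow> i < n \<Longrightarrow> \<bar>sv x i\<bar> = Pp x i + Nn x i"
  using D_excl[of x i] Pp_nn[of x i] Nn_nn[of x i] by (auto simp: sv_def)

lemma sum_abs_sv: "x \<in> Dset \<Longrightarrow> (\<Sum>i<n. \<bar>sv x i\<bar>) = 1"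
  using sum_A[of x] D_sum[of x] abs_sv[of x] by simp

lemma sumsq_pos: "x \<in> Dset \<Longrightarrow> (\<Sum>i<n. (sv x i)^2) > 0"
proof (rule ccontr)
  assume x: "x \<in> Dset" and "\<not> (\<Sum>i<n. (sv x i)^2) > 0"
  then have "(\<Sum>i<n. (sv x i)^2) = 0"
    by (metis (no_types, lifting) less_eq_real_def sum_nonneg zero_le_power2)
  then have "\<forall>i\<in>{..<n}. (sv x i)^2 = 0" by (subst (asm) sum_nonneg_eq_0_iff) auto
  then have "(\<Sum>i<n. \<bar>sv x i\<bar>) = 0" by simp
  then show False using sum_abs_sv[OF x] by simp
qed

lemma nrm_pos: "x \<in> Dset \<Longrightarrow> nrm x > 0"
  using sumsq_pos by (simp add: nrm_def)

abbreviation "Sset \<equiv> {y::nat\<Rightarrow>real. (\<Sum>i\<le>n-1. y i ^ 2) = 1 \<and> (\<forall>i>n-1. y i = 0)}"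

lemma atMost_eq: "{..n-1} = {..<n}" using n1 by auto
lemma atMost_eq': "{..n - Suc 0} = {..<n}" using n1 by auto
lemma gt_eq: "(i > n - 1) = (i \<ge> n)" using n1 by auto
lemma gt_eq': "(i > n - Suc 0) = (i \<ge> n)" using n1 by auto

lemma topS: "topspace (nsphere (n-1)) = Sset"
  by (simp add: nsphere)

lemma Fm_S: assumes "x \<in> Dset" shows "Fm x \<in> Sset"
proof -
  have np: "nrm x > 0" using nrm_pos assms .
  have sq: "(nrm x)^2 = (\<Sum>i<n. (sv x i)^2)" unfolding nrm_def
    by (simp add: sum_nonneg)
  have "(\<Sum>i<n. (Fm x i)^2) = (\<Sum>i<n. (sv x i)^2) / (nrm x)^2"
    by (simp add: Fm_def power_divide sum_divide_distrib)
  also have "\<dots> = 1" using sq sumsq_pos[OF assms] by simp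
  finally show ?thesis by (simp add: atMost_eq' gt_eq' Fm_def)
qed

lemma proj: "continuous_map Dt euclideanreal (\<lambda>x. x e)"
  unfolding forest_complex_realization_def
  by (rule continuous_map_from_subtopology[OF continuous_map_product_projection]) simp

lemma cont_sv: "continuous_map Dt euclideanreal (\<lambda>x. sv x i)"
  unfolding sv_def Pp_def Nn_def by (intro continuous_intros proj finR)

lemma nrm_ne: "x \<in> topspace Dt \<Longrightarrow> sqrt (\<Sum>i<n. (sv x i)^2) \<noteq> 0"
  using nrm_pos[of x] topD by (simp add: nrm_def)

lemma cont_Fm: "continuous_map Dt (nsphere (n-1)) Fm"
proof -
  have "continuous_map Dt euclideanreal (\<lambda>x. Fm x k)" for k
  proof (cases "k < n")
    case True
    have "continuous_map Dt euclideanreal (\<lambda>x. sv x k / nrm x)"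
      unfolding nrm_def
      by (intro continuous_intros cont_sv finite_lessThan nrm_ne)
    then show ?thesis using True by (simp add: Fm_def)
  next
    case False then show ?thesis by (simp add: Fm_def)
  qed
  then show ?thesis
    unfolding nsphere continuous_map_in_subtopology
    using Fm_S topD by (auto simp: continuous_map_componentwise_UNIV)
qed


lemma ix_nu: "i < n \<Longrightarrow> ix (\<nu> i) = i"
  unfolding ix_def using bij by (auto simp: bij_betw_def inv_into_f_f)

lemma Ls_pos: assumes "y \<in> Sset" shows "Ls y > 0"
proof (rule ccontr)
  assume "\<not> Ls y > 0"
  then have "Ls y = 0" unfolding Ls_def by (metis (no_types, lifting) abs_ge_zero less_eq_real_def sum_nonneg)
  then have "\<forall>i\<in>{..<n}. \<bar>y i\<bar> = 0" unfolding Ls_def by (subst (asm) sum_nonneg_eq_0_iff) auto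
  then have "(\<Sum>i<n. (y i)^2) = 0" by simp
  then show False using assms by (simp add: atMost_eq')
qed

lemma Gm_b: "i < n \<Longrightarrow> Gm y (\<nu> i, p (\<nu> i)) = max (y i) 0 / Ls y"
  using nu_W ix_nu by (simp add: Gm_def)
lemma Gm_a: "i < n \<Longrightarrow> Gm y (p (\<nu> i), \<nu> i) = max (- y i) 0 / Ls y"
  using nu_W ix_nu pW by (simp add: Gm_def)
lemma Gm_R: "i < n \<Longrightarrow> u \<in> R (\<nu> i) \<Longrightarrow> Gm y (u, \<nu> i) = 0"
proof -
  assume i: "i < n" "u \<in> R (\<nu> i)"
  then have uV: "u \<in> V" and ne: "u \<noteq> p (\<nu> i)" by (auto simp: R_def)
  have "\<not> (u \<in> W \<and> \<nu> i = p u)" using p_inv uV ne by auto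
  then show ?thesis using ne by (auto simp: Gm_def)
qed
lemma Gm_supp: "Gm y (a,b) \<noteq> 0 \<Longrightarrow> (a \<in> W \<and> b = p a) \<or> (b \<in> W \<and> a = p b)"
  by (auto simp: Gm_def split: if_splits)

lemma Pp_Gm: "i < n \<Longrightarrow> Pp (Gm y) i = max (y i) 0 / Ls y"
  using Gm_b Gm_R by (simp add: Pp_def)
lemma Nn_Gm: "i < n \<Longrightarrow> Nn (Gm y) i = max (- y i) 0 / Ls y"
  using Gm_a by (simp add: Nn_def)
lemma sv_Gm: "i < n \<Longrightarrow> sv (Gm y) i = y i / Ls y"
  using Pp_Gm Nn_Gm by (simp add: sv_def max_def diff_divide_distrib[symmetric])

lemma p_inj: "a \<in> V \<Longrightarrow> b \<in> V \<Longrightarrow> p a = p b \<Longrightarrow> a = b" by (metis p_inv)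

end

context bt begin
lemma Gm_D: assumes y: "y \<in> Sset" shows "Gm y \<in> Dset"
proof -
  have L: "Ls y > 0" using Ls_pos y .
  have nn: "0 \<le> Gm y e" for e using L by (cases e) (auto simp: Gm_def)
  have "sum (Gm y) A = (\<Sum>i<n. \<bar>y i\<bar> / Ls y)" unfolding sum_A
    by (rule sum.cong) (auto simp: Pp_Gm Nn_Gm max_def add_divide_distrib[symmetric])
  also have "\<dots> = 1" using L by (simp add: sum_divide_distrib[symmetric] Ls_def)
  finally have s1: "sum (Gm y) A = 1" .
  define Rn where "Rn = {(p w, w) | w. w \<in> W \<and> Gm y (p w, w) \<noteq> 0}"
  define Sp where "Sp = {(w, p w) | w. w \<in> W \<and> Gm y (w, p w) \<noteq> 0}"
  have sub: "{e. Gm y e \<noteq> 0} \<subseteq> Rn \<union> Sp"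
  proof
    fix e assume "e \<in> {e. Gm y e \<noteq> 0}"
    then obtain a b where e: "e = (a,b)" "Gm y (a,b) \<noteq> 0" by (cases e) auto
    then show "e \<in> Rn \<union> Sp" using Gm_supp[OF e(2)] unfolding Rn_def Sp_def by auto
  qed
  have acR: "acyclic Rn"
    by (rule acyclic_bip[of _ "V - W" W]) (auto simp: Rn_def dest: pW intro: p_in WV[THEN subsetD])
  have acy: "acyclic (Rn \<union> Sp)"
  proof (rule acyclic_add_sinks[OF acR])
    fix a b c assume ab: "(a,b) \<in> Sp"
    then have aW: "a \<in> W" "b = p a" and g1: "Gm y (a, p a) \<noteq> 0" by (auto simp: Sp_def)
    then have bnW: "b \<notin> W" using pW by auto
    show "(b,c) \<notin> Rn \<union> Sp"
    proof
      assume "(b,c) \<in> Rn \<union> Sp"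
      then have "(b,c) \<in> Rn" using bnW by (auto simp: Sp_def)
      then obtain w where w: "w \<in> W" "b = p w" "c = w" "Gm y (p w, w) \<noteq> 0" by (auto simp: Rn_def)
      have "w = a" using p_inj w aW WV by auto
      obtain i where i: "i < n" "\<nu> i = a" using bij aW by (auto simp: bij_betw_def)
      have "max (y i) 0 \<noteq> 0" "max (- y i) 0 \<noteq> 0"
        using g1 w \<open>w = a\<close> Gm_b[OF i(1), of y] Gm_a[OF i(1), of y] i by auto
      then show False by (auto simp: max_def split: if_splits)
    qed
  qed
  have RS: "Rn \<union> Sp \<subseteq> {(a, p a) | a. a \<in> V}"
    unfolding Rn_def Sp_def using WV p_inv p_in by fastforce
  have RSA: "Rn \<union> Sp \<subseteq> A"
  proof -
    have "(a, p a) \<in> A" if "a \<in> V" for a using p_adj that A_iff by auto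
    then show ?thesis using RS by auto
  qed
  have "directed_forest A (Rn \<union> Sp)"
  proof (rule forest_intro[OF finA RSA _ acy])
    fix v a b assume "(a,v) \<in> Rn \<union> Sp" "(b,v) \<in> Rn \<union> Sp"
    then have "a \<in> V" "b \<in> V" "p a = v" "p b = v" using RS by auto
    then show "a = b" using p_inj by auto
  qed
  then have "directed_forest A {e. Gm y e \<noteq> 0}" using forest_mono sub finA by blast
  then show ?thesis using nn s1 by (simp add: Dset_def)
qed

lemma FG: assumes y: "y \<in> Sset" shows "Fm (Gm y) = y"
proof
  fix i
  have L: "Ls y > 0" using Ls_pos y .
  have "(\<Sum>i<n. (sv (Gm y) i)^2) = (\<Sum>i<n. (y i)^2) / (Ls y)^2"
    by (simp add: sv_Gm power_divide sum_divide_distrib)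
  also have "\<dots> = 1 / (Ls y)^2" using y by (simp add: atMost_eq')
  finally have "nrm (Gm y) = 1 / Ls y" using L by (simp add: nrm_def real_sqrt_divide)
  then show "Fm (Gm y) i = y i"
    using L y sv_Gm by (auto simp: Fm_def gt_eq')
qed


lemma ix_props: "a \<in> W \<Longrightarrow> ix a < n \<and> \<nu> (ix a) = a"
  unfolding ix_def using bij
  by (metis bij_betw_def bij_betw_inv_into_left bij_betw_inv_into bij_betw_apply lessThan_iff f_inv_into_f)

lemma Ls_Fm: assumes "x \<in> Dset" shows "Ls (Fm x) = 1 / nrm x"
proof -
  have np: "nrm x > 0" using nrm_pos assms .
  have "Ls (Fm x) = (\<Sum>i<n. \<bar>sv x i\<bar> / nrm x)" unfolding Ls_def Fm_def
    by (rule sum.cong) (use np in auto)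
  also have "\<dots> = 1 / nrm x" using sum_abs_sv[OF assms] by (simp add: sum_divide_distrib[symmetric])
  finally show ?thesis .
qed

lemma GF_b: assumes "x \<in> Dset" "i < n" shows "Gm (Fm x) (\<nu> i, p (\<nu> i)) = Pp x i"
proof -
  have np: "nrm x > 0" using nrm_pos assms(1) .
  have "Gm (Fm x) (\<nu> i, p (\<nu> i)) = max (sv x i / nrm x) 0 / (1 / nrm x)"
    using Gm_b[OF assms(2)] Ls_Fm[OF assms(1)] assms(2) by (simp add: Fm_def)
  also have "\<dots> = max (sv x i) 0" using np by (simp add: max_def divide_simps)
  also have "\<dots> = Pp x i" using D_excl[OF assms] Pp_nn[OF assms(1), of i] Nn_nn[OF assms(1), of i]
    by (auto simp: sv_def max_def)
  finally show ?thesis .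
qed

lemma GF_a: assumes "x \<in> Dset" "i < n" shows "Gm (Fm x) (p (\<nu> i), \<nu> i) = Nn x i"
proof -
  have np: "nrm x > 0" using nrm_pos assms(1) .
  have "Gm (Fm x) (p (\<nu> i), \<nu> i) = max (- (sv x i / nrm x)) 0 / (1 / nrm x)"
    using Gm_a[OF assms(2)] Ls_Fm[OF assms(1)] assms(2) by (simp add: Fm_def)
  also have "\<dots> = max (- sv x i) 0" using np by (simp add: max_def divide_simps)
  also have "\<dots> = Nn x i" using D_excl[OF assms] Pp_nn[OF assms(1), of i] Nn_nn[OF assms(1), of i]
    by (auto simp: sv_def max_def)
  finally show ?thesis .
qed

lemma GF_supp: assumes x: "x \<in> Dset" and nz: "Gm (Fm x) (a,b) \<noteq> 0"
  shows "x (a,b) \<noteq> 0 \<or> (a \<in> W \<and> b = p a \<and> Pp x (ix a) \<noteq> 0)"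
proof -
  from Gm_supp[OF nz] show ?thesis
  proof
    assume h: "a \<in> W \<and> b = p a"
    then have "ix a < n" "\<nu> (ix a) = a" using ix_props by auto
    then show ?thesis using GF_b[OF x, of "ix a"] nz h by auto
  next
    assume h: "b \<in> W \<and> a = p b"
    then have "ix b < n" "\<nu> (ix b) = b" using ix_props by auto
    then show ?thesis using GF_a[OF x, of "ix b"] nz h by (auto simp: Nn_def)
  qed
qed

lemma H_D:
  assumes x: "x \<in> Dset" and t: "0 \<le> t" "t \<le> 1"
  shows "(\<lambda>e. (1 - t) * Gm (Fm x) e + t * x e) \<in> Dset"
proof -
  define g where "g = Gm (Fm x)"
  have g: "g \<in> Dset" unfolding g_def using Gm_D Fm_S x by blast
  have nn: "0 \<le> (1 - t) * g e + t * x e" for e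
    using D_nn[OF g, of e] D_nn[OF x, of e] t by simp
  have sm: "sum (\<lambda>e. (1 - t) * g e + t * x e) A = 1"
    using D_sum[OF g] D_sum[OF x] by (simp add: sum.distrib sum_distrib_left[symmetric])
  define \<sigma> where "\<sigma> = {e. x e \<noteq> 0}"
  define S where "S = {(w, p w) | w. w \<in> W \<and> Pp x (ix w) \<noteq> 0}"
  have F: "directed_forest A \<sigma>" unfolding \<sigma>_def using D_forest[OF x] .
  have \<sigma>A: "\<sigma> \<subseteq> A" using F unfolding directed_forest_def by simp
  have sub: "{e. (1 - t) * g e + t * x e \<noteq> 0} \<subseteq> \<sigma> \<union> S"
  proof
    fix e assume "e \<in> {e. (1 - t) * g e + t * x e \<noteq> 0}"
    then have "g e \<noteq> 0 \<or> x e \<noteq> 0" by auto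
    moreover obtain a b where e: "e = (a,b)" by (cases e)
    ultimately show "e \<in> \<sigma> \<union> S" using GF_supp[OF x, of a b] unfolding g_def \<sigma>_def S_def by auto
  qed
  have SA: "S \<subseteq> A"
  proof
    fix e assume "e \<in> S"
    then obtain w where "e = (w, p w)" "w \<in> W" by (auto simp: S_def)
    then show "e \<in> A" using p_adj WV A_iff by auto
  qed
  have key: "b = a" if aS: "(a,v) \<in> S" and bv: "(b,v) \<in> \<sigma> \<union> S" for a b v
  proof -
    from aS have aW: "a \<in> W" and v: "v = p a" by (auto simp: S_def)
    have aV: "a \<in> V" using aW WV by auto
    have vV: "v \<in> V" "v \<notin> W" using v p_in aV pW aW by auto
    have "(b,v) \<in> A" using bv \<sigma>A SA by auto
    then have "adj E b v" by (simp add: A_iff)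
    then have "b = p v" using leafy vV by auto
    then show ?thesis using v p_inv aV by simp
  qed
  have fo: "directed_forest A (\<sigma> \<union> S)"
  proof (rule forest_intro[OF finA])
    show "\<sigma> \<union> S \<subseteq> A" using \<sigma>A SA by auto
    show "acyclic (\<sigma> \<union> S)"
    proof (rule acyclic_add_sinks)
      show "acyclic \<sigma>" using F unfolding directed_forest_def by simp
      fix a b c assume ab: "(a,b) \<in> S"
      then have aW: "a \<in> W" and b: "b = p a" and P: "Pp x (ix a) \<noteq> 0" by (auto simp: S_def)
      have aV: "a \<in> V" using aW WV by auto
      have bV: "b \<in> V" "b \<notin> W" using b p_in aV pW aW by auto
      show "(b,c) \<notin> \<sigma> \<union> S"
      proof
        assume bc: "(b,c) \<in> \<sigma> \<union> S"
        have "(b,c) \<notin> S" using bV by (auto simp: S_def)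
        then have bcs: "(b,c) \<in> \<sigma>" using bc by auto
        then have "adj E b c" using \<sigma>A by (auto simp: A_iff)
        then have "c = p b" using leafy bV adj_sym by auto
        then have "c = a" using b p_inv aV by simp
        then have "x (p a, a) \<noteq> 0" using bcs b by (simp add: \<sigma>_def)
        moreover have "ix a < n" "\<nu> (ix a) = a" using ix_props aW by auto
        ultimately have "Nn x (ix a) \<noteq> 0" by (simp add: Nn_def)
        then show False using D_excl[OF x \<open>ix a < n\<close>] P by auto
      qed
    qed
    fix v a b assume av: "(a,v) \<in> \<sigma> \<union> S" and bv: "(b,v) \<in> \<sigma> \<union> S"
    show "a = b"
    proof (cases "(a,v) \<in> S")
      case True then show ?thesis using key bv by metis
    next
      case False
      show ?thesis
      proof (cases "(b,v) \<in> S")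
        case True then show ?thesis using key av by metis
      next
        case False
        then show ?thesis using \<open>(a,v) \<notin> S\<close> av bv forest_inj[OF F finA] by auto
      qed
    qed
  qed
  have "directed_forest A {e. (1 - t) * g e + t * x e \<noteq> 0}"
    using forest_mono[OF fo sub finA] .
  then show ?thesis using nn sm unfolding Dset_def g_def by auto
qed

lemma Dt_eq: "Dt = subtopology (powertop_real UNIV) Dset"
  by (simp add: forest_complex_realization_def Dset_def)

lemma cont_Ls: "continuous_map (nsphere (n-1)) euclideanreal Ls"
  unfolding Ls_def by (intro continuous_intros continuous_map_nsphere_projection finite_lessThan)

lemma Ls_ne: "y \<in> topspace (nsphere (n-1)) \<Longrightarrow> Ls y \<noteq> 0"
  using Ls_pos topS by fastforce

lemma cont_Gm: "continuous_map (nsphere (n-1)) Dt Gm"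
proof -
  have "continuous_map (nsphere (n-1)) euclideanreal (\<lambda>y. Gm y e)" for e
  proof -
    obtain a b where e: "e = (a,b)" by (cases e)
    show ?thesis
    proof (cases "a \<in> W \<and> b = p a")
      case True
      then have "(\<lambda>y. Gm y e) = (\<lambda>y. max (y (ix a)) 0 / Ls y)" by (simp add: e Gm_def)
      moreover have "continuous_map (nsphere (n-1)) euclideanreal (\<lambda>y. max (y (ix a)) 0 / Ls y)"
        by (intro continuous_intros continuous_map_nsphere_projection cont_Ls Ls_ne)
      ultimately show ?thesis by simp
    next
      case False
      show ?thesis
      proof (cases "b \<in> W \<and> a = p b")
        case True
        then have "(\<lambda>y. Gm y e) = (\<lambda>y. max (- y (ix b)) 0 / Ls y)" using True pW[of b] by (simp add: e Gm_def)
        moreover have "continuous_map (nsphere (n-1)) euclideanreal (\<lambda>y. max (- y (ix b)) 0 / Ls y)"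
          by (intro continuous_intros continuous_map_nsphere_projection cont_Ls Ls_ne)
        ultimately show ?thesis by simp
      next
        case False2: False
        then have "(\<lambda>y. Gm y e) = (\<lambda>y. 0)" using False by (intro ext) (auto simp: e Gm_def)
        then show ?thesis by simp
      qed
    qed
  qed
  then show ?thesis unfolding Dt_eq continuous_map_in_subtopology
    using Gm_D topS by (auto simp: continuous_map_componentwise_UNIV)
qed

lemma main_loc: "Dt homotopy_equivalent_space nsphere (n-1)"
  unfolding homotopy_equivalent_space_def
proof (intro exI conjI)
  show cF: "continuous_map Dt (nsphere (n-1)) Fm" by (rule cont_Fm)
  show cG: "continuous_map (nsphere (n-1)) Dt Gm" by (rule cont_Gm)
  show "homotopic_with (\<lambda>x. True) (nsphere (n-1)) (nsphere (n-1)) (Fm \<circ> Gm) id"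
    by (rule homotopic_with_equal) (use continuous_map_compose[OF cG cF] FG topS in auto)
  define H where "H = (\<lambda>z::real \<times> (('a\<times>'a) \<Rightarrow> real). (\<lambda>e. (1 - fst z) * Gm (Fm (snd z)) e + fst z * snd z e))"
  have cGF: "continuous_map Dt euclideanreal (\<lambda>x. Gm (Fm x) e)" for e
  proof -
    have "continuous_map Dt Dt (Gm \<circ> Fm)" using continuous_map_compose[OF cF cG] .
    then have "continuous_map Dt (powertop_real UNIV) (Gm \<circ> Fm)"
      unfolding Dt_eq continuous_map_in_subtopology by auto
    then have "\<forall>k. continuous_map Dt euclideanreal (\<lambda>x. (Gm \<circ> Fm) x k)"
      unfolding continuous_map_componentwise_UNIV .
    then show ?thesis by (simp only: o_def)
  qed
  have cfst: "continuous_map (prod_topology (top_of_set {0..1}) Dt) euclideanreal fst"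
    using continuous_map_fst continuous_map_in_subtopology by metis
  have "continuous_map (prod_topology (top_of_set {0..1}) Dt) Dt H"
    unfolding Dt_eq continuous_map_in_subtopology
  proof
    show "continuous_map (prod_topology (top_of_set {0..1}) (subtopology (powertop_real UNIV) Dset)) (powertop_real UNIV) H"
      unfolding continuous_map_componentwise_UNIV H_def Dt_eq[symmetric]
    proof
      fix e
      have c1: "continuous_map (prod_topology (top_of_set {0..1}) Dt) euclideanreal (\<lambda>z. Gm (Fm (snd z)) e)"
        using continuous_map_compose[OF continuous_map_snd cGF[of e]] by (simp add: o_def)
      have c2: "continuous_map (prod_topology (top_of_set {0..1}) Dt) euclideanreal (\<lambda>z. snd z e)"
        using continuous_map_compose[OF continuous_map_snd proj[of e]] by (simp add: o_def)
      show "continuous_map (prod_topology (top_of_set {0..1}) Dt) euclideanreal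
          (\<lambda>z. (1 - fst z) * Gm (Fm (snd z)) e + fst z * snd z e)"
        by (intro continuous_intros c1 c2 cfst)
    qed
    show "H \<in> topspace (prod_topology (top_of_set {0..1}) (subtopology (powertop_real UNIV) Dset)) \<rightarrow> Dset"
      using H_D by (auto simp: H_def Dt_eq[symmetric] topD)
  qed
  then show "homotopic_with (\<lambda>x. True) Dt Dt (Gm \<circ> Fm) id"
    unfolding homotopic_with[of Dt "\<lambda>x. True", simplified]
    by (intro exI[of _ H]) (auto simp: H_def)
qed
end



lemma g_adjV: assumes "simple_graph V E" "adj E u v" shows "u \<in> V" "v \<in> V"
proof -
  from assms(2) have e: "{u,v} \<in> E" unfolding adj_def by simp
  have "\<forall>e\<in>E. \<exists>a b. e = {a, b} \<and> a \<noteq> b \<and> a \<in> V \<and> b \<in> V" using assms(1) by (simp add: simple_graph_def)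
  from bspec[OF this e] obtain a b where ab: "{u,v} = {a,b}" "a \<in> V" "b \<in> V" by blast
  have "u \<in> {a,b}" "v \<in> {a,b}" using ab(1) by (metis insertI1, metis insertI1 insert_commute)
  then show "u \<in> V" "v \<in> V" using ab(2,3) by auto
qed

lemma g_adj_sym: "adj E u v \<Longrightarrow> adj E v u"
  unfolding adj_def by (metis insert_commute)

lemma leaf_unique:
  assumes sg: "simple_graph V E" and v: "v \<in> V" "is_leaf E v"
  shows "\<exists>!u. adj E v u"
proof -
  have c1: "card {e\<in>E. v \<in> e} = Suc 0" using v by (simp add: is_leaf_def degree_def)
  have "\<exists>e. {e\<in>E. v \<in> e} = {e}" using c1 by (simp only: card_1_singleton_iff)
  then obtain e where e: "{e\<in>E. v \<in> e} = {e}" by (elim exE)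
  have "e \<in> {e\<in>E. v \<in> e}" using e by simp
  then have eE: "e \<in> E" "v \<in> e" by simp_all
  have "\<forall>e\<in>E. \<exists>a b. e = {a, b} \<and> a \<noteq> b \<and> a \<in> V \<and> b \<in> V" using sg by (simp add: simple_graph_def)
  from bspec[OF this eE(1)] obtain a b where ab: "e = {a,b}" "a \<noteq> b" by blast
  define u where "u = (if v = a then b else a)"
  have vab: "v = a \<or> v = b" using ab(1) eE(2) by simp
  have u: "e = {v,u}" "u \<noteq> v"
  proof -
    show "e = {v,u}"
    proof (cases "v = a")
      case True then show ?thesis using ab by (simp add: u_def)
    next
      case False then have "v = b" using vab by simp
      then show ?thesis using ab False by (simp add: u_def insert_commute)
    qed
    show "u \<noteq> v" using ab(2) vab by (auto simp: u_def)
  qed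
  have adju: "adj E v u" using u eE(1) by (simp add: adj_def)
  have uniq: "u' = u" if "adj E v u'" for u'
  proof -
    have "{v,u'} \<in> E" "v \<noteq> u'" using that by (simp_all add: adj_def)
    then have "{v,u'} \<in> {e\<in>E. v \<in> e}" by simp
    then have eq: "{v,u'} = {v,u}" using e u by simp
    have "u' \<in> {v,u'}" by simp
    then have "u' \<in> {v,u}" using eq by simp
    then show ?thesis using \<open>v \<noteq> u'\<close> by simp
  qed
  show ?thesis using adju uniq by (intro ex1I[of _ u])
qed

lemma basic_setup:
  fixes V :: "'a set" and E :: "'a set set" and n :: nat
  assumes n1: "n \<ge> 1" and bt: "basic_tree V E" and cV: "card V = 2 * n"
  shows "\<exists>W p \<nu>. bt V E W p n \<nu>"
proof -
  have tree: "is_tree V E" using bt by (simp add: basic_tree_def)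
  then have sg: "simple_graph V E" and con: "graph_connected V E" by (auto simp: is_tree_def)
  have finV: "finite V" using sg by (simp add: simple_graph_def)
  show ?thesis
  proof (cases "card V = 2")
    case True
    then obtain a b where V: "V = {a,b}" "a \<noteq> b" by (meson card_2_iff)
    have n: "n = 1" using True cV by simp
    have "(a,b) \<in> {(x, y). adj E x y}\<^sup>*" using con V unfolding graph_connected_def by simp
    then obtain c where c: "adj E a c"
      by (rule converse_rtranclE) (use V(2) in auto)
    have "c \<in> V" "c \<noteq> a" using g_adjV[OF sg c] c by (auto simp: adj_def)
    then have ab: "adj E a b" using c V by auto
    define p where "p = (\<lambda>v. if v = a then b else a)"
    have "bt V E {a} p n (\<lambda>_. a)"
    proof
      show "finite V" by (rule finV)
      show "simple_graph V E" by (rule sg)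
      show "{a} \<subseteq> V" using V by simp
      show "1 \<le> n" by (rule n1)
      show "bij_betw (\<lambda>_. a) {..<n} {a}" using n by (auto simp: bij_betw_def inj_on_def lessThan_Suc)
      fix v assume v: "v \<in> V"
      show "p v \<in> V" using V by (simp add: p_def)
      show "p (p v) = v" using V v by (auto simp: p_def)
      show "adj E v (p v)" using V v ab g_adj_sym by (auto simp: p_def)
      show "(v \<in> {a}) = (p v \<notin> {a})" using V v by (auto simp: p_def)
      fix u assume "v \<notin> {a}" "adj E u v"
      then show "u = p v" using V v g_adjV[OF sg \<open>adj E u v\<close>] by (auto simp: p_def adj_def)
    qed
    then show ?thesis by blast
  next
    case False
    have "\<exists>m. card V = 2 * m \<and> card {v\<in>V. is_leaf E v} = m \<and>
           card {v\<in>V. \<not> is_leaf E v} = m \<and>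
           (\<forall>v\<in>V. \<not> is_leaf E v \<longrightarrow> card {u\<in>V. is_leaf E u \<and> adj E v u} = 1)"
      using bt False unfolding basic_tree_def by simp
    then obtain m where H: "card V = 2 * m \<and> card {v\<in>V. is_leaf E v} = m \<and>
           card {v\<in>V. \<not> is_leaf E v} = m \<and>
           (\<forall>v\<in>V. \<not> is_leaf E v \<longrightarrow> card {u\<in>V. is_leaf E u \<and> adj E v u} = 1)" by (elim exE)
    have m1: "card V = 2 * m" and m3: "card {v\<in>V. \<not> is_leaf E v} = m" using H by simp_all
    have one: "card {u\<in>V. is_leaf E u \<and> adj E v u} = 1" if "v\<in>V" "\<not> is_leaf E v" for v
      using H that by simp
    have mn: "m = n" using m1 cV by simp
    have n2: "n \<ge> 2" using False cV n1 by simp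
    define W where "W = {v\<in>V. \<not> is_leaf E v}"
    have leafU: "\<exists>!u. adj E v u" if "v \<in> V" "is_leaf E v" for v using leaf_unique[OF sg that] .
    have lfU: "\<exists>!u. u\<in>V \<and> is_leaf E u \<and> adj E w u" if "w \<in> V" "\<not> is_leaf E w" for w
    proof -
      have "\<exists>u. {u\<in>V. is_leaf E u \<and> adj E w u} = {u}"
        using one[OF that] by (simp only: card_1_singleton_iff One_nat_def)
      then obtain u where equ: "{u\<in>V. is_leaf E u \<and> adj E w u} = {u}" by (elim exE)
      then have "u \<in> {u\<in>V. is_leaf E u \<and> adj E w u}" by simp
      then have Pu: "u\<in>V \<and> is_leaf E u \<and> adj E w u" by simp
      have "u' = u" if "u'\<in>V \<and> is_leaf E u' \<and> adj E w u'" for u'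
      proof -
        have "u' \<in> {u\<in>V. is_leaf E u \<and> adj E w u}" using that by simp
        then show ?thesis using equ by simp
      qed
      then show ?thesis using Pu by (intro ex1I[of _ u])
    qed
    define mm where "mm v = (THE u. adj E v u)" for v
    define ll where "ll w = (THE u. u\<in>V \<and> is_leaf E u \<and> adj E w u)" for w
    have mm1: "adj E v (mm v)" if "v \<in> V" "is_leaf E v" for v
      unfolding mm_def by (rule theI'[OF leafU[OF that]])
    have mm2: "u = mm v" if "v \<in> V" "is_leaf E v" "adj E v u" for u v
      unfolding mm_def by (rule the1_equality[OF leafU[OF that(1,2)] that(3), symmetric])
    have llP: "ll w \<in> V \<and> is_leaf E (ll w) \<and> adj E w (ll w)" if "w \<in> V" "\<not> is_leaf E w" for w
      unfolding ll_def by (rule theI'[OF lfU[OF that]])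
    have ll4: "u = ll w" if "w \<in> V" "\<not> is_leaf E w" "u \<in> V" "is_leaf E u" "adj E w u" for w u
      unfolding ll_def by (rule the1_equality[OF lfU[OF that(1,2)], symmetric]) (use that in simp)
    have noll: "\<not> is_leaf E u" if v: "v \<in> V" "is_leaf E v" and a: "adj E v u" for u v
    proof
      assume ul: "is_leaf E u"
      have uV: "u \<in> V" using g_adjV[OF sg a] by simp
      have reach: "z \<in> {u, v}" if "(v,z) \<in> {(x, y). adj E x y}\<^sup>*" for z
        using that
      proof (induction rule: rtrancl_induct)
        case base then show ?case by simp
      next
        case (step y z)
        then have yz: "adj E y z" by simp
        show ?case
        proof (cases "y = v")
          case True
          then have yz': "adj E v z" using yz by simp
          have "z = mm v" by (rule mm2[OF v yz'])
          moreover have "u = mm v" by (rule mm2[OF v a])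
          ultimately have "z = u" by simp
          then show ?thesis by simp
        next
          case False
          then have "y = u" using step.IH by simp
          then have yz': "adj E u z" using yz by simp
          have "z = mm u" by (rule mm2[OF uV ul yz'])
          moreover have "v = mm u" by (rule mm2[OF uV ul g_adj_sym[OF a]])
          ultimately have "z = v" by simp
          then show ?thesis by simp
        qed
      qed
      have "V \<subseteq> {u,v}"
      proof
        fix z assume "z \<in> V"
        then have "(v,z) \<in> {(x, y). adj E x y}\<^sup>*" using con v(1) unfolding graph_connected_def by simp
        then show "z \<in> {u,v}" by (rule reach)
      qed
      then have "card V \<le> card {u,v}" by (simp add: card_mono)
      also have "\<dots> \<le> 2" by (simp add: card_insert_if)
      finally show False using cV n2 by simp
    qed
    define p where "p v = (if v \<in> W then ll v else mm v)" for v
    have finW: "finite W" using finV by (simp add: W_def)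
    obtain \<nu> where nu: "bij_betw \<nu> {0..<card W} W" using ex_bij_betw_nat_finite[OF finW] by (elim exE)
    have cW: "card W = n" using m3 mn W_def by simp
    have "bt V E W p n \<nu>"
    proof
      show "finite V" by (rule finV)
      show "simple_graph V E" by (rule sg)
      show "W \<subseteq> V" by (auto simp: W_def)
      show "1 \<le> n" by (rule n1)
      show "bij_betw \<nu> {..<n} W" using nu cW by (simp add: atLeast0LessThan)
      fix v assume v: "v \<in> V"
      show "p v \<in> V"
      proof (cases "v \<in> W")
        case True then have "\<not> is_leaf E v" by (simp add: W_def)
        then show ?thesis using llP[OF v] True by (simp add: p_def)
      next
        case False then have vl: "is_leaf E v" using v by (simp add: W_def)
        then show ?thesis using g_adjV(2)[OF sg mm1[OF v vl]] False by (simp add: p_def)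
      qed
      show "adj E v (p v)"
      proof (cases "v \<in> W")
        case True then have "\<not> is_leaf E v" by (simp add: W_def)
        then show ?thesis using llP[OF v] True by (simp add: p_def)
      next
        case False then have vl: "is_leaf E v" using v by (simp add: W_def)
        then show ?thesis using mm1[OF v vl] False by (simp add: p_def)
      qed
      show "(v \<in> W) = (p v \<notin> W)"
      proof (cases "v \<in> W")
        case True then have "\<not> is_leaf E v" by (simp add: W_def)
        then show ?thesis using llP[OF v] True by (simp add: p_def W_def)
      next
        case False
        then have vl: "is_leaf E v" using v by (simp add: W_def)
        have "mm v \<in> V" using g_adjV(2)[OF sg mm1[OF v vl]] .
        moreover have "\<not> is_leaf E (mm v)" using noll[OF v vl mm1[OF v vl]] .
        ultimately show ?thesis using False vl v by (simp add: p_def W_def)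
      qed
      show "p (p v) = v"
      proof (cases "v \<in> W")
        case True
        then have vn: "\<not> is_leaf E v" by (simp add: W_def)
        have L: "ll v \<in> V" "is_leaf E (ll v)" "adj E v (ll v)" using llP[OF v vn] by simp_all
        have "ll v \<notin> W" using L by (simp add: W_def)
        then have "p (p v) = mm (ll v)" using True by (simp add: p_def)
        also have "\<dots> = v" using mm2[OF L(1,2) g_adj_sym[OF L(3)]] by simp
        finally show ?thesis .
      next
        case False
        then have vl: "is_leaf E v" using v by (simp add: W_def)
        have mV: "mm v \<in> V" using g_adjV(2)[OF sg mm1[OF v vl]] .
        have mnl: "\<not> is_leaf E (mm v)" using noll[OF v vl mm1[OF v vl]] .
        have "p (p v) = ll (mm v)" using False vl v mV mnl by (simp add: p_def W_def)
        also have "\<dots> = v" using ll4[OF mV mnl v vl g_adj_sym[OF mm1[OF v vl]]] by simp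
        finally show ?thesis .
      qed
      fix u assume nw: "v \<notin> W" and uv: "adj E u v"
      then have vl: "is_leaf E v" using v by (simp add: W_def)
      have "u = mm v" by (rule mm2[OF v vl g_adj_sym[OF uv]])
      then show "u = p v" using nw by (simp add: p_def)
    qed
    then show ?thesis by blast
  qed
qed


theorem mainTheorem10:
  fixes V :: "'a set" and E :: "'a set set" and n :: nat
  assumes "n \<ge> 1"
    and "basic_tree V E"
    and "card V = 2 * n"
  shows "forest_complex_realization (doubled_arcs E)
           homotopy_equivalent_space nsphere (n - 1)"
proof -
  obtain W p \<nu> where "bt V E W p n \<nu>" using basic_setup[OF assms] by blast
  then interpret bt V E W p n \<nu> .
  show ?thesis by (rule main_loc)
qed

end
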